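(* Let $G$ be a graph with adjacency matrix $A$ and positive degrees $d=A\mathbf 1$, let $e=(i,j)$, $i\ne j$, $a_{ij}>0$, be any edge, $v=e_i-e_j$, and $r>0$. Let \[ S_r=(1+r)D-A+\frac{1}{\|d\|_1}dd^T . \] Then $S_r$ is symmetric positive definite, and with $x=S_r^{-1}v$, $\alpha=a_{ij}(x_i-x_j)$, $\beta=a_{ij}x^TDx$, one has $\alpha<1$ and \[ c_r(e)=\frac{\beta}{1-\alpha}. \]
   Context: Graphs are undirected and possibly weighted on vertex set $\{1,\dots,n\}$, with symmetric nonnegative adjacency matrix $A=(a_{k\ell})$; $D=\mathrm{diag}(d)$, $\|d\|_1=\sum_kd_k$, $D^{\pm1/2}=\mathrm{diag}(d_k^{\pm1/2})$; $e_k$ is the $k$-th column of the identity and $\mathbf 1$ the all-ones vector. With $\widehat A=A+a_{ij}vv^T$ (deleting edge $e$ and adding loops of weight $a_{ij}$ at $i$ and $j$; $\widehat A\mathbf 1=d$). For $r>0$ and symmetric nonnegative $B$ with $B\mathbf 1=d$, $K_r(B)=\operatorname{Tr}\Big(\big((1+r)I-D^{-1/2}BD^{-1/2}+\tfrac{1}{\|d\|_1}D^{1/2}\mathbf 1\mathbf 1^TD^{1/2}\big)^{-1}\Big)-(1+r)^{-1}$; the regularized score is $c_r(e)=K_r(\widehat A)-K_r(A)$. *)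

theory Defs
  imports "HOL-Analysis.Analysis"
begin

definition degvec :: "real^'n^'n \<Rightarrow> real^'n" where
  "degvec A = (\<chi> k. \<Sum>l\<in>UNIV. A$k$l)"

definition diagm :: "real^'n \<Rightarrow> real^'n^'n" where
  "diagm d = (\<chi> k l. if k = l then d$k else 0)"

definition outer :: "real^'n \<Rightarrow> real^'n \<Rightarrow> real^'n^'n" where
  "outer u w = (\<chi> k l. u$k * w$l)"

definition norm1 :: "real^'n \<Rightarrow> real" where
  "norm1 d = (\<Sum>k\<in>UNIV. \<bar>d$k\<bar>)"

definition sym_posdef :: "real^'n^'n \<Rightarrow> bool" where
  "sym_posdef S \<longleftrightarrow> transpose S = S \<and> (\<forall>x. x \<noteq> 0 \<longrightarrow> x \<bullet> (S *v x) > 0)"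

definition edgevec :: "'n::finite \<Rightarrow> 'n \<Rightarrow> real^'n" where
  "edgevec i j = axis i 1 - axis j 1"

definition Ahat :: "real^'n^'n \<Rightarrow> 'n \<Rightarrow> 'n \<Rightarrow> real^'n^'n" where
  "Ahat A i j = A + (A$i$j) *\<^sub>R outer (edgevec i j) (edgevec i j)"

text \<open>K_r(B), where d is the degree vector (B 1 = d).\<close>
definition Kr :: "real \<Rightarrow> real^'n \<Rightarrow> real^'n^'n \<Rightarrow> real" where
  "Kr r d B =
     trace (matrix_inv ((1 + r) *\<^sub>R mat 1
        - diagm (\<chi> k. 1 / sqrt (d$k)) ** B ** diagm (\<chi> k. 1 / sqrt (d$k))
        + (1 / norm1 d) *\<^sub>R outer (\<chi> k. sqrt (d$k)) (\<chi> k. sqrt (d$k))))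
     - 1 / (1 + r)"

definition cr :: "real \<Rightarrow> real^'n^'n \<Rightarrow> 'n \<Rightarrow> 'n \<Rightarrow> real" where
  "cr r A i j = Kr r (degvec A) (Ahat A i j) - Kr r (degvec A) A"

definition Smat :: "real \<Rightarrow> real^'n^'n \<Rightarrow> real^'n^'n" where
  "Smat r A = (1 + r) *\<^sub>R diagm (degvec A) - A
      + (1 / norm1 (degvec A)) *\<^sub>R outer (degvec A) (degvec A)"

end

theory Submission imports Defs begin

lemma diagm_comp[simp]: "diagm a $ k $ l = (if k = l then a$k else 0)"
  by (simp add: diagm_def)
lemma outer_comp[simp]: "outer u w $ k $ l = u$k * w$l"
  by (simp add: outer_def)

lemma ifm1[simp]: "(if P then a else 0) * (b::real) = (if P then a * b else 0)" by simp
lemma ifm2[simp]: "(b::real) * (if P then a else 0) = (if P then b * a else 0)" by simp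

lemma diagm_mv: "diagm a *v x = (\<chi> k. a$k * x$k)"
  by (simp add: vec_eq_iff matrix_vector_mult_def )

lemma outer_mv: "outer u w *v x = (w \<bullet> x) *\<^sub>R u"
  by (simp add: vec_eq_iff matrix_vector_mult_def inner_vec_def sum_distrib_left mult.commute mult.left_commute)

lemma mv_scale: fixes M :: "real^'n^'m" shows "(c *\<^sub>R M) *v x = c *\<^sub>R (M *v x)"
  by (simp add: vec_eq_iff matrix_vector_mult_def sum_distrib_left mult.assoc scaleR_vec_def)

lemma diag_mm_diag: "(diagm a ** M ** diagm b) = (\<chi> k l. a$k * M$k$l * b$l)"
  by (simp add: vec_eq_iff matrix_matrix_mult_def )

lemma inv_unique:
  fixes X Y :: "real^'n^'n"
  assumes "X ** Y = mat 1"
  shows "matrix_inv X = Y"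
proof -
  have "Y ** X = mat 1" using assms matrix_left_right_inverse by blast
  hence ex: "X ** Y = mat 1 \<and> Y ** X = mat 1" using assms by simp
  have "X ** matrix_inv X = mat 1 \<and> matrix_inv X ** X = mat 1"
    unfolding matrix_inv_def by (rule someI, rule ex)
  then have "matrix_inv X = matrix_inv X ** (X ** Y)" using assms by simp
  also have "\<dots> = Y" using \<open>X ** matrix_inv X = mat 1 \<and> matrix_inv X ** X = mat 1\<close>
    by (simp add: matrix_mul_assoc)
  finally show ?thesis .
qed

lemma lap:
  fixes A :: "real^'n^'n"
  assumes symA: "transpose A = A" and nonneg: "\<forall>k l. A$k$l \<ge> 0" and ij: "i \<noteq> j"
  shows "x \<bullet> (diagm (degvec A) *v x) - x \<bullet> (A *v x) \<ge> A$i$j * (x$i - x$j)^2"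
proof -
  have sym: "A$l$k = A$k$l" for k l
  proof -
    have "transpose A $ k $ l = A$l$k" by (simp add: transpose_def)
    thus ?thesis using symA by simp
  qed
  define F where "F k l = A$k$l * (x$k - x$l)^2" for k l
  have 1: "x \<bullet> (diagm (degvec A) *v x) = (\<Sum>k\<in>UNIV. \<Sum>l\<in>UNIV. A$k$l * (x$k)^2)"
    by (simp add: inner_vec_def diagm_mv degvec_def sum_distrib_left power2_eq_square mult.commute mult.left_commute)
  have 2: "x \<bullet> (A *v x) = (\<Sum>k\<in>UNIV. \<Sum>l\<in>UNIV. A$k$l * x$k * x$l)"
    by (simp add: inner_vec_def matrix_vector_mult_def sum_distrib_left mult.commute mult.left_commute)
  have 3: "(\<Sum>k\<in>UNIV. \<Sum>l\<in>UNIV. A$k$l * (x$l)^2) = (\<Sum>k\<in>UNIV. \<Sum>l\<in>UNIV. A$k$l * (x$k)^2)"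
    by (subst sum.swap) (simp add: sym)
  have 4: "(\<Sum>k\<in>UNIV. \<Sum>l\<in>UNIV. F k l) = (\<Sum>k\<in>UNIV. \<Sum>l\<in>UNIV. A$k$l * (x$k)^2) - 2 * (\<Sum>k\<in>UNIV. \<Sum>l\<in>UNIV. A$k$l * x$k * x$l) + (\<Sum>k\<in>UNIV. \<Sum>l\<in>UNIV. A$k$l * (x$l)^2)"
    by (simp add: F_def power2_diff algebra_simps sum.distrib sum_subtractf sum_distrib_left)
  have Fnn: "F k l \<ge> 0" for k l using nonneg by (simp add: F_def)
  have 5: "(\<Sum>k\<in>UNIV. \<Sum>l\<in>UNIV. F k l) \<ge> (\<Sum>k\<in>{i,j}. \<Sum>l\<in>UNIV. F k l)"
    by (rule sum_mono2) (auto intro: sum_nonneg Fnn)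
  have 6: "(\<Sum>k\<in>{i,j}. \<Sum>l\<in>UNIV. F k l) \<ge> F i j + F j i"
  proof -
    have "(\<Sum>k\<in>{i,j}. \<Sum>l\<in>UNIV. F k l) = (\<Sum>l\<in>UNIV. F i l) + (\<Sum>l\<in>UNIV. F j l)" using ij by simp
    moreover have "F i j \<le> (\<Sum>l\<in>UNIV. F i l)" by (rule member_le_sum) (auto intro: Fnn)
    moreover have "F j i \<le> (\<Sum>l\<in>UNIV. F j l)" by (rule member_le_sum) (auto intro: Fnn)
    ultimately show ?thesis by linarith
  qed
  have 7: "F i j + F j i = 2 * (A$i$j * (x$i - x$j)^2)"
    by (simp add: F_def sym[of i j] power2_commute)
  show ?thesis using 1 2 3 4 5 6 7 by linarith
qed

lemma mm_diff_l: fixes A :: "real^'n^'n" shows "A ** (B - C) = A ** B - A ** C"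
  by (simp add: vec_eq_iff matrix_matrix_mult_def algebra_simps sum_subtractf)
lemma mm_diff_r: fixes A :: "real^'n^'n" shows "(B - C) ** A = B ** A - C ** A"
  by (simp add: vec_eq_iff matrix_matrix_mult_def algebra_simps sum_subtractf)
lemma mm_add_r: fixes A :: "real^'n^'n" shows "(B + C) ** A = B ** A + C ** A"
  by (simp add: vec_eq_iff matrix_matrix_mult_def algebra_simps sum.distrib)
lemma mm_outer_r: fixes M :: "real^'n^'n" shows "M ** outer u w = outer (M *v u) w"
  by (simp add: vec_eq_iff matrix_matrix_mult_def matrix_vector_mult_def sum_distrib_right mult.assoc)
lemma mm_outer_l: fixes M :: "real^'n^'n" shows "outer u w ** M = outer u (transpose M *v w)"
  by (simp add: vec_eq_iff matrix_matrix_mult_def matrix_vector_mult_def transpose_def sum_distrib_left mult_ac)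
lemma outer_outer: fixes u :: "real^'n" shows "outer u w ** outer y z = (w \<bullet> y) *\<^sub>R outer u z"
  by (simp add: vec_eq_iff matrix_matrix_mult_def inner_vec_def sum_distrib_left sum_distrib_right mult_ac)
lemma ev_comp: "edgevec i j $ k = (if k = i then 1 else 0) - (if k = j then 1 else 0)"
  by (simp add: edgevec_def axis_def)
lemma ev_inner: "edgevec i j \<bullet> x = x$i - x$j"
  by (simp add: inner_vec_def ev_comp left_diff_distrib sum_subtractf)
lemma Smat_comp: "Smat r A $ k $ l = (1+r) * (if k = l then degvec A $ k else 0) - A$k$l
   + (1 / norm1 (degvec A)) * (degvec A $ k * degvec A $ l)"
  by (simp add: Smat_def)

lemma Kr_eq:
  fixes d :: "real^'n" and X Y B :: "real^'n^'n"
  assumes dpos: "\<forall>k. d$k > 0" and XY: "X ** Y = mat 1"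
    and Xdef: "X = (1+r) *\<^sub>R diagm d - B + (1/norm1 d) *\<^sub>R outer d d"
  shows "Kr r d B = (\<Sum>k\<in>UNIV. d$k * Y$k$k) - 1/(1+r)"
proof -
  define p where "p = (\<chi> k. 1 / sqrt (d$k))"
  define s where "s = (\<chi> k. sqrt (d$k))"
  have h1: "p$k * d$k * p$k = 1" for k
    using dpos[rule_format, of k] by (simp add: p_def field_simps)
  have h2: "p$k * d$k = s$k" for k
    using dpos[rule_format, of k] proof -
    have "p$k * d$k = d$k / sqrt (d$k)" by (simp add: p_def)
    also have "\<dots> = s$k" using dpos[rule_format, of k] by (simp add: s_def real_div_sqrt)
    finally show ?thesis .
  qed
  have h3: "p$k * s$k = 1" for k
    using dpos[rule_format, of k] by (simp add: p_def s_def field_simps)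
  have h4: "s$k * s$k = d$k" for k
    using dpos[rule_format, of k] by (simp add: s_def)
  have M: "(1+r) *\<^sub>R mat 1 - diagm p ** B ** diagm p + (1/norm1 d) *\<^sub>R outer s s
      = diagm p ** X ** diagm p"
  proof -
    have "((1+r) *\<^sub>R mat 1 - diagm p ** B ** diagm p + (1/norm1 d) *\<^sub>R outer s s) $ k $ l
        = (diagm p ** X ** diagm p) $ k $ l" for k l
    proof (cases "k = l")
      case True
      have "p$k * ((1 + r) * d$k - B$k$k + d$k * d$k / norm1 d) * p$k
         = (1+r) * (p$k * d$k * p$k) - p$k * B$k$k * p$k + (p$k * d$k) * (p$k * d$k) / norm1 d"
        by (simp add: algebra_simps)
      then show ?thesis using True
        by (simp add: diag_mm_diag Xdef mat_def h1 h2 h3 mult.commute[of "s$l" "p$l"])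
    next
      case False
      have "p$k * (d$k * d$l / norm1 d - B$k$l) * p$l
         = (p$k * d$k) * (p$l * d$l) / norm1 d - p$k * B$k$l * p$l"
        by (simp add: algebra_simps)
      then show ?thesis using False
        by (simp add: diag_mm_diag Xdef mat_def h2)
    qed
    then show ?thesis by (simp add: vec_eq_iff)
  qed
  have PQ: "diagm p ** diagm s = mat 1"
    by (simp add: vec_eq_iff matrix_matrix_mult_def mat_def h3)
  have inv: "(diagm p ** X ** diagm p) ** (diagm s ** Y ** diagm s) = mat 1"
  proof -
    have "(diagm p ** X ** diagm p) ** (diagm s ** Y ** diagm s)
        = (diagm p ** X) ** ((diagm p ** diagm s) ** (Y ** diagm s))"
      by (simp add: matrix_mul_assoc)
    also have "\<dots> = diagm p ** ((X ** Y) ** diagm s)" by (simp add: PQ matrix_mul_assoc)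
    also have "\<dots> = mat 1" by (simp add: XY PQ)
    finally show ?thesis .
  qed
  have "Kr r d B = trace (diagm s ** Y ** diagm s) - 1/(1+r)"
    unfolding Kr_def p_def[symmetric] s_def[symmetric] M inv_unique[OF inv] ..
  also have "trace (diagm s ** Y ** diagm s) = (\<Sum>k\<in>UNIV. d$k * Y$k$k)"
    by (simp add: trace_def diag_mm_diag h4[symmetric] mult_ac)
  finally show ?thesis .
qed

theorem mainTheorem12:
  fixes A :: "real^'n^'n" and i j :: 'n and r :: real
  assumes symA: "transpose A = A"
    and nonneg: "\<forall>k l. A$k$l \<ge> 0"
    and degpos: "\<forall>k. degvec A $ k > 0"
    and ij: "i \<noteq> j"
    and edge: "A$i$j > 0"
    and rpos: "r > 0"
  shows "sym_posdef (Smat r A) \<and>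
    (let x = matrix_inv (Smat r A) *v edgevec i j;
         \<alpha> = A$i$j * (x$i - x$j);
         \<beta> = A$i$j * (x \<bullet> (diagm (degvec A) *v x))
     in \<alpha> < 1 \<and> cr r A i j = \<beta> / (1 - \<alpha>))"
proof -
  define d where "d = degvec A"
  define S where "S = Smat r A"
  have dposk: "d$k > 0" for k using degpos d_def by blast
  define a where "a = A$i$j"
  define v where "v = edgevec i j"
  define c where "c = 1 / norm1 d"
  have sym: "A$l$k = A$k$l" for k l
  proof -
    have "transpose A $ k $ l = A$l$k" by (simp add: transpose_def)
    thus ?thesis using symA by simp
  qed
  have npos: "norm1 d > 0"
  proof -
    have "\<forall>k. \<bar>d$k\<bar> > 0" using degpos unfolding d_def by (metis abs_of_pos)
    thus ?thesis unfolding norm1_def by (intro sum_pos) auto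
  qed
  have cpos: "c > 0" using npos by (simp add: c_def)
  have Sdef: "S = (1+r) *\<^sub>R diagm d - A + c *\<^sub>R outer d d"
    by (simp add: S_def Smat_def d_def c_def)
  have symS: "transpose S = S"
    by (simp add: vec_eq_iff transpose_def S_def Smat_comp sym mult.commute)
  define Q where "Q x = x \<bullet> (diagm d *v x)" for x
  have Qsum: "Q x = (\<Sum>k\<in>UNIV. d$k * (x$k)^2)" for x
    by (simp add: Q_def inner_vec_def diagm_mv power2_eq_square mult_ac)
  have Qpos: "Q x > 0" if xn0: "x \<noteq> 0" for x
  proof -
    obtain k where "x$k \<noteq> 0" using xn0 by (metis vec_eq_iff zero_index)
    hence "d$k * (x$k)^2 > 0" using dposk[of k] by simp
    also have "d$k * (x$k)^2 \<le> (\<Sum>k\<in>UNIV. d$k * (x$k)^2)"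
      by (rule member_le_sum) (auto intro!: mult_nonneg_nonneg simp: less_imp_le[OF dposk])
    finally show ?thesis by (simp add: Qsum)
  qed
  have quad: "x \<bullet> (S *v x) = (1+r) * Q x - x \<bullet> (A *v x) + c * (d \<bullet> x)^2" for x
    by (simp add: Sdef Q_def matrix_vector_mult_diff_rdistrib matrix_vector_mult_add_rdistrib
        mv_scale outer_mv inner_diff_right inner_add_right power2_eq_square algebra_simps inner_commute[of x d])
  have lapx: "x \<bullet> (A *v x) \<le> Q x - a * (x$i - x$j)^2" for x
    using lap[OF symA nonneg ij, of x] by (simp add: Q_def d_def a_def)
  have qge: "x \<bullet> (S *v x) \<ge> r * Q x + a * (x$i - x$j)^2" for x
  proof -
    have "c * (d \<bullet> x)^2 \<ge> 0" using cpos by simp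
    thus ?thesis using quad[of x] lapx[of x] by (simp add: algebra_simps)
  qed
  have apos: "a > 0" using edge by (simp add: a_def)
  have pd: "x \<bullet> (S *v x) > 0" if "x \<noteq> 0" for x
  proof -
    have "r * Q x > 0" using Qpos[OF that] rpos by simp
    moreover have "a * (x$i - x$j)^2 \<ge> 0" using apos by simp
    ultimately show ?thesis using qge[of x] by linarith
  qed
  have SPD: "sym_posdef S" unfolding sym_posdef_def using symS pd by blast
  have "\<forall>x. S *v x = 0 \<longrightarrow> x = 0"
    using pd by (metis inner_zero_right less_irrefl)
  then obtain B where BS: "B ** S = mat 1" using matrix_left_invertible_ker by blast
  hence SB: "S ** B = mat 1" using matrix_left_right_inverse by blast
  have invS: "matrix_inv S = B" by (rule inv_unique[OF SB])
  have symB: "transpose B = B"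
  proof -
    have "transpose B ** S = mat 1"
      using SB by (metis matrix_transpose_mul symS transpose_mat)
    hence "transpose B = transpose B ** (S ** B)" using SB by simp
    also have "\<dots> = B" using \<open>transpose B ** S = mat 1\<close> by (simp add: matrix_mul_assoc)
    finally show ?thesis .
  qed
  define x where "x = B *v v"
  have Sx: "S *v x = v" by (simp add: x_def matrix_vector_mul_assoc SB)
  have vne: "v \<noteq> 0"
  proof
    assume "v = 0" hence "v$i = 0" by simp
    thus False using ij by (simp add: v_def ev_comp)
  qed
  have xne: "x \<noteq> 0" using Sx vne by auto
  define t where "t = x$i - x$j"
  have vx: "v \<bullet> x = t" by (simp add: v_def ev_inner t_def)
  have tpos: "t > 0" using pd[OF xne] by (simp add: Sx vx inner_commute)
  have "t \<ge> r * Q x + a * t^2" using qge[of x] by (simp add: Sx vx inner_commute t_def)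
  moreover have "r * Q x > 0" using Qpos[OF xne] rpos by simp
  ultimately have "t * (1 - a * t) > 0" by (simp add: algebra_simps power2_eq_square)
  hence alt: "a * t < 1" using tpos by (simp add: zero_less_mult_iff)
  define g where "g = a / (1 - a * t)"
  define T where "T = S - a *\<^sub>R outer v v"
  define Y where "Y = B + g *\<^sub>R outer x x"
  have TY: "T ** Y = mat 1"
  proof -
    have Bv: "transpose B *v v = x" by (simp add: symB x_def)
    have Bv2: "v v* B = x" using Bv by simp
    have ovx: "outer v v *v x = t *\<^sub>R v" by (simp add: outer_mv vx)
    have osc: "outer (t *\<^sub>R v) x = t *\<^sub>R outer v x" by (simp add: vec_eq_iff)
    have "T ** Y = S ** B + g *\<^sub>R (S ** outer x x) - a *\<^sub>R (outer v v ** B)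
         - (a * g) *\<^sub>R (outer v v ** outer x x)"
      by (simp add: T_def Y_def mm_diff_r matrix_add_ldistrib matrix_scalar_ac scalar_matrix_assoc[symmetric]
           algebra_simps)
    also have "\<dots> = mat 1 + (g - a - a * g * t) *\<^sub>R outer v x"
      by (simp add: SB mm_outer_r mm_outer_l outer_outer Sx Bv Bv2 ovx osc vx algebra_simps)
    also have "g - a - a * g * t = 0" using alt by (simp add: g_def field_simps)
    finally show ?thesis by simp
  qed
  have dpos': "\<forall>k. d$k > 0" using degpos by (simp add: d_def)
  have KA: "Kr r d A = (\<Sum>k\<in>UNIV. d$k * B$k$k) - 1/(1+r)"
    by (rule Kr_eq[OF dpos' SB]) (simp add: Sdef c_def)
  have KH: "Kr r d (Ahat A i j) = (\<Sum>k\<in>UNIV. d$k * Y$k$k) - 1/(1+r)"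
    by (rule Kr_eq[OF dpos' TY]) (simp add: T_def Sdef c_def Ahat_def a_def v_def algebra_simps)
  have crv: "cr r A i j = g * Q x"
    by (simp add: cr_def d_def[symmetric] KA KH Y_def Qsum sum_distrib_left power2_eq_square
        algebra_simps sum.distrib)
  show ?thesis
    unfolding Let_def invS[unfolded S_def] x_def[unfolded v_def, symmetric]
    using SPD alt crv
    by (simp add: S_def[symmetric] a_def[symmetric] t_def[symmetric] g_def Q_def d_def[symmetric])
qed

end
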